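(* For every prime $p\ge7$, $N_{=}(4p)\ge p^2+11p-1$.
   Context: Graphs are finite, undirected and simple; the order of a graph is its number of vertices. For a positive integer $k$, $N_{=}(k)$ denotes the smallest integer $n\ge1$ such that every graph on $n$ vertices contains an induced regular subgraph (all vertices of the subgraph having the same degree within it) of order exactly $k$. *)

theory Defs
  imports Main "HOL-Computational_Algebra.Primes"
begin

text \<open>A finite simple graph is given by a finite vertex set V and a symmetric,
irreflexive adjacency relation E (only its restriction to V matters).\<close>

definition simple_graph :: "'a set \<Rightarrow> ('a \<Rightarrow> 'a \<Rightarrow> bool) \<Rightarrow> bool" where
  "simple_graph V E \<longleftrightarrow> finite V \<and> (\<forall>x y. E x y \<longrightarrow> E y x) \<and> (\<forall>x. \<not> E x x)"

definition deg_in :: "('a \<Rightarrow> 'a \<Rightarrow> bool) \<Rightarrow> 'a set \<Rightarrow> 'a \<Rightarrow> nat" where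
  "deg_in E S v = card {u \<in> S. E v u}"

definition induced_regular :: "('a \<Rightarrow> 'a \<Rightarrow> bool) \<Rightarrow> 'a set \<Rightarrow> bool" where
  "induced_regular E S \<longleftrightarrow> (\<exists>d. \<forall>v\<in>S. deg_in E S v = d)"

definition has_induced_regular_of_order :: "'a set \<Rightarrow> ('a \<Rightarrow> 'a \<Rightarrow> bool) \<Rightarrow> nat \<Rightarrow> bool" where
  "has_induced_regular_of_order V E k \<longleftrightarrow>
     (\<exists>S. S \<subseteq> V \<and> card S = k \<and> induced_regular E S)"

text \<open>N_=(k): least n \<ge> 1 such that every graph on n vertices contains an induced
regular subgraph of order exactly k. Graphs on n vertices are taken (up to
isomorphism) on the vertex set {0..<n}.\<close>
definition N_eq :: "nat \<Rightarrow> nat" where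
  "N_eq k = (LEAST n. n \<ge> 1 \<and>
     (\<forall>E :: nat \<Rightarrow> nat \<Rightarrow> bool. simple_graph {0..<n} E \<longrightarrow>
        has_induced_regular_of_order {0..<n} E k))"

end

theory Submission
  imports Defs "HOL-Library.Ramsey"
begin

definition ladj :: "nat \<Rightarrow> nat \<Rightarrow> bool" where
  "ladj j k \<longleftrightarrow> 12 \<le> j \<or> 12 \<le> k \<or> (j < 6 \<longleftrightarrow> k < 6) \<or> (j < 6 \<and> j + 6 < k) \<or> (k < 6 \<and> k + 6 < j)"

definition ldeg :: "nat set \<Rightarrow> nat \<Rightarrow> nat" where
  "ldeg T j = card {k \<in> T. k \<noteq> j \<and> ladj j k}"

lemma ladj_sym: "ladj j k = ladj k j"
  unfolding ladj_def by auto

lemma local_regular: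
  assumes fin: "finite T" and ne: "T \<noteq> {}" and reg: "\<forall>j\<in>T. ldeg T j = d"
  shows "card T = d + 1 \<or> (d \<le> 2 \<and> card T = 2*d + 2)"
proof (cases "\<exists>j\<in>T. 12 \<le> j")
  case True
  then obtain j where j: "j \<in> T" "12 \<le> j" by blast
  have "{k \<in> T. k \<noteq> j \<and> ladj j k} = T - {j}" using j by (auto simp: ladj_def)
  then have "ldeg T j = card T - 1" using j fin by (simp add: ldeg_def)
  moreover have "card T \<ge> 1" using fin ne by (simp add: Suc_leI card_gt_0_iff)
  ultimately show ?thesis using reg j by auto
next
  case False
  then have lt12: "\<forall>j\<in>T. j < 12" by auto
  define nn where "nn j = card {k \<in> T. k \<noteq> j \<and> \<not> ladj j k}" for j
  have split: "ldeg T j + nn j = card T - 1" if "j \<in> T" for j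
  proof -
    have "{k \<in> T. k \<noteq> j \<and> ladj j k} \<union> {k \<in> T. k \<noteq> j \<and> \<not> ladj j k} = T - {j}" by auto
    moreover have "{k \<in> T. k \<noteq> j \<and> ladj j k} \<inter> {k \<in> T. k \<noteq> j \<and> \<not> ladj j k} = {}" by auto
    ultimately have "card (T - {j}) = ldeg T j + nn j"
      unfolding ldeg_def nn_def using fin
      by (metis (no_types, lifting) card_Un_disjoint finite_Diff finite_Un)
    then show ?thesis using that fin by simp
  qed
  have cT: "card T \<ge> 1" using fin ne by (simp add: Suc_leI card_gt_0_iff)
  define r where "r = card T - 1 - d"
  have nnr: "nn j = r" if "j \<in> T" for j using split[OF that] reg that unfolding r_def by auto
  have dle: "d \<le> card T - 1" using split reg ne by fastforce
  show ?thesis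
  proof (cases "r = 0")
    case True
    then show ?thesis using dle cT unfolding r_def by auto
  next
    case False
    define TA where "TA = {k \<in> T. k < 6}"
    define TB where "TB = {k \<in> T. 6 \<le> k}"
    have nnA: "{k \<in> T. k \<noteq> j \<and> \<not> ladj j k} = {k \<in> T. 6 \<le> k \<and> k \<le> j + 6}" if "j \<in> T" "j < 6" for j
      using that lt12 unfolding ladj_def by auto
    have nnB: "{k \<in> T. k \<noteq> j \<and> \<not> ladj j k} = {k \<in> T. k < 6 \<and> j \<le> k + 6}" if "j \<in> T" "6 \<le> j" for j
      using that lt12 unfolding ladj_def by auto
    have finA: "finite TA" "finite TB" using fin unfolding TA_def TB_def by auto
    have TAne: "TA \<noteq> {}"
    proof
      assume "TA = {}"
      obtain j where j: "j \<in> T" using ne by auto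
      then have "6 \<le> j" using \<open>TA = {}\<close> unfolding TA_def by auto
      then have "{k \<in> T. k < 6 \<and> j \<le> k + 6} = {}" using \<open>TA = {}\<close> unfolding TA_def by auto
      then have "nn j = 0" using nnB[OF j \<open>6 \<le> j\<close>] unfolding nn_def by simp
      then show False using nnr[OF j] False by simp
    qed
    have TBne: "TB \<noteq> {}"
    proof
      assume "TB = {}"
      obtain j where j: "j \<in> T" using ne by auto
      then have "j < 6" using \<open>TB = {}\<close> unfolding TB_def by auto
      then have "{k \<in> T. 6 \<le> k \<and> k \<le> j + 6} = {}" using \<open>TB = {}\<close> unfolding TB_def by auto
      then have "nn j = 0" using nnA[OF j \<open>j < 6\<close>] unfolding nn_def by simp
      then show False using nnr[OF j] False by simp
    qed
    define a0 where "a0 = Min TA"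
    define a1 where "a1 = Max TA"
    have a0: "a0 \<in> TA" "\<forall>a\<in>TA. a0 \<le> a" using finA TAne unfolding a0_def by auto
    have a1: "a1 \<in> TA" "\<forall>a\<in>TA. a \<le> a1" using finA TAne unfolding a1_def by auto
    have allB: "\<forall>b\<in>TB. b \<le> a0 + 6"
    proof (rule ccontr)
      assume "\<not> (\<forall>b\<in>TB. b \<le> a0 + 6)"
      then obtain b where b: "b \<in> TB" "a0 + 6 < b" by auto
      let ?N0 = "{k \<in> T. 6 \<le> k \<and> k \<le> a0 + 6}"
      let ?N1 = "{k \<in> T. 6 \<le> k \<and> k \<le> a1 + 6}"
      have "a0 \<le> a1" using a0 a1 by auto
      then have sub: "?N0 \<subseteq> ?N1" by auto
      have "card ?N0 = r" using nnr[of a0] nnA[of a0] a0 unfolding nn_def TA_def by auto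
      moreover have "card ?N1 = r" using nnr[of a1] nnA[of a1] a1 unfolding nn_def TA_def by auto
      ultimately have "?N0 = ?N1" using sub fin by (simp add: card_subset_eq)
      have "b \<in> T" "6 \<le> b" using b unfolding TB_def by auto
      then have "a1 + 6 < b"
      proof -
        { assume "b \<le> a1 + 6"
          then have "b \<in> ?N1" using \<open>b \<in> T\<close> \<open>6 \<le> b\<close> by simp
          then have "b \<in> ?N0" using \<open>?N0 = ?N1\<close> by simp
          then have False using b by simp }
        then show ?thesis by force
      qed
      then have "{k \<in> T. k < 6 \<and> b \<le> k + 6} = {}" using a1 unfolding TA_def by fastforce
      then have "nn b = 0" using nnB[of b] b unfolding nn_def TB_def by auto
      then show False using nnr[of b] b False unfolding TB_def by auto
    qed
    have rB: "r = card TB"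
    proof -
      have "{k \<in> T. 6 \<le> k \<and> k \<le> a0 + 6} = TB" using allB unfolding TB_def by auto
      then show ?thesis using nnr[of a0] nnA[of a0] a0 unfolding nn_def TA_def by auto
    qed
    obtain b0 where b0: "b0 \<in> TB" using TBne by auto
    have rA: "r = card TA"
    proof -
      have "{k \<in> T. k < 6 \<and> b0 \<le> k + 6} = TA" using allB b0 a0 unfolding TA_def by fastforce
      then show ?thesis using nnr[of b0] nnB[of b0] b0 unfolding nn_def TB_def by auto
    qed
    have "T = TA \<union> TB" "TA \<inter> TB = {}" unfolding TA_def TB_def by auto
    then have cTAB: "card T = card TA + card TB" using finA by (simp add: card_Un_disjoint)
    have "TB \<subseteq> {6..a0+6}" using allB unfolding TB_def by auto
    then have cB: "card TB \<le> a0 + 1" using card_mono[of "{6..a0+6}" TB] by simp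
    have "TA \<subseteq> {a0..<6}" using a0 unfolding TA_def by auto
    then have cA: "card TA \<le> 6 - a0" using card_mono[of "{a0..<6}" TA] by simp
    have "a0 < 6" using a0 unfolding TA_def by auto
    show ?thesis using cTAB rA rB cA cB False \<open>a0 < 6\<close> unfolding r_def by auto
  qed
qed

lemma clique_bound:
  assumes T: "T \<subseteq> {..<n}" and n: "12 \<le> n" and cl: "\<forall>j\<in>T. \<forall>k\<in>T. k \<noteq> j \<longrightarrow> ladj j k"
  shows "card T \<le> n - 6"
proof -
  define T1 where "T1 = {j \<in> T. j < 12}"
  define T2 where "T2 = {j \<in> T. 12 \<le> j}"
  have "T = T1 \<union> T2" "T1 \<inter> T2 = {}" unfolding T1_def T2_def by auto
  moreover have "finite T" using T finite_subset by blast
  then have f: "finite T1" "finite T2" unfolding T1_def T2_def by auto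
  ultimately have c: "card T = card T1 + card T2" by (simp add: card_Un_disjoint)
  have "T2 \<subseteq> {12..<n}" using T unfolding T2_def by auto
  then have c2: "card T2 \<le> n - 12" using card_mono[of "{12..<n}" T2] by simp
  have inj: "inj_on (\<lambda>j. j mod 6) T1"
  proof (rule inj_onI)
    fix j k assume j: "j \<in> T1" and k: "k \<in> T1" and e: "j mod 6 = k mod 6"
    show "j = k"
    proof (rule ccontr)
      assume "j \<noteq> k"
      then have "ladj j k" using cl j k unfolding T1_def by auto
      moreover have "j < 12" "k < 12" using j k unfolding T1_def by auto
      moreover have "j = k + 6 \<or> k = j + 6"
      proof -
        have "j mod 6 = (if j < 6 then j else j - 6)" "k mod 6 = (if k < 6 then k else k - 6)"
          using \<open>j < 12\<close> \<open>k < 12\<close> by (auto simp: mod_if)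
        then show ?thesis using e \<open>j \<noteq> k\<close> \<open>j < 12\<close> \<open>k < 12\<close> by (auto split: if_splits)
      qed
      ultimately show False unfolding ladj_def by auto
    qed
  qed
  have "(\<lambda>j. j mod 6) ` T1 \<subseteq> {..<6}" by auto
  then have "card ((\<lambda>j. j mod 6) ` T1) \<le> 6" using card_mono[of "{..<6::nat}"] by fastforce
  then have c1: "card T1 \<le> 6" using card_image[OF inj] by simp
  show ?thesis using c c1 c2 n by simp
qed

lemma ldeg_full_clique:
  assumes fin: "finite T" and j: "j \<in> T" and dg: "ldeg T j = card T - 1"
  shows "\<forall>k\<in>T. k \<noteq> j \<longrightarrow> ladj j k"
proof -
  have sub: "{k \<in> T. k \<noteq> j \<and> ladj j k} \<subseteq> T - {j}" by auto
  have "card {k \<in> T. k \<noteq> j \<and> ladj j k} = card (T - {j})" using dg j fin unfolding ldeg_def by simp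
  then have "{k \<in> T. k \<noteq> j \<and> ladj j k} = T - {j}" using sub fin by (simp add: card_subset_eq)
  then show ?thesis by blast
qed

lemma ldeg_small:
  assumes "T \<subseteq> {..<6}" "j \<in> T" "finite T"
  shows "ldeg T j = card T - 1"
proof -
  have "{k \<in> T. k \<noteq> j \<and> ladj j k} = T - {j}" using assms unfolding ladj_def by auto
  then show ?thesis using assms unfolding ldeg_def by simp
qed

definition om :: "nat \<Rightarrow> nat \<Rightarrow> nat" where
  "om p i = (if i = 0 then 4*p - 1 else if i \<le> 2 then 2*p - 1 else p - 1)"

definition sz :: "nat \<Rightarrow> nat \<Rightarrow> nat" where
  "sz p i = (if i < p - 1 then om p i + 6 else if i = p - 1 then 3 else 1)"

definition VV :: "nat \<Rightarrow> (nat \<times> nat) set" where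
  "VV p = Sigma {..<3*p} (\<lambda>i. {..<sz p i})"

definition Eg :: "nat \<times> nat \<Rightarrow> nat \<times> nat \<Rightarrow> bool" where
  "Eg u v \<longleftrightarrow> fst u = fst v \<and> snd u \<noteq> snd v \<and> ladj (snd u) (snd v)"

lemma sum_split3:
  fixes g :: "nat \<Rightarrow> nat"
  assumes "a \<le> b"
  shows "(\<Sum>i<b. g i) = (\<Sum>i<a. g i) + (\<Sum>i\<in>{a..<b}. g i)"
proof -
  have "{..<b} = {..<a} \<union> {a..<b}" "{..<a} \<inter> {a..<b} = {}" using assms by auto
  then show ?thesis by (simp add: sum.union_disjoint)
qed

lemma comp_facts:
  assumes p7: "p \<ge> 7" and S: "S \<subseteq> VV p" and reg: "\<forall>v\<in>S. deg_in Eg S v = d" and i: "i < 3*p"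
  defines "T \<equiv> {j. (i,j) \<in> S}"
  shows "card T = 0 \<or> card T = d + 1 \<or> (d \<le> 2 \<and> card T = 2*d + 2)"
    and "p - 1 \<le> i \<Longrightarrow> card T = 0 \<or> card T = d + 1"
    and "p - 1 \<le> i \<Longrightarrow> card T \<le> 3"
    and "p \<le> i \<Longrightarrow> card T \<le> 1"
    and "i < p - 1 \<Longrightarrow> card T = d + 1 \<Longrightarrow> d + 1 \<le> om p i"
proof -
  have Tsub: "T \<subseteq> {..<sz p i}" using S unfolding T_def VV_def by auto
  have fin: "finite T" using Tsub finite_subset by blast
  have ld: "ldeg T j = d" if "j \<in> T" for j
  proof -
    have "{u \<in> S. Eg (i,j) u} = Pair i ` {k \<in> T. k \<noteq> j \<and> ladj j k}"
    proof (rule set_eqI)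
      fix u :: "nat \<times> nat"
      obtain a b where u: "u = (a,b)" by fastforce
      show "u \<in> {u \<in> S. Eg (i,j) u} \<longleftrightarrow> u \<in> Pair i ` {k \<in> T. k \<noteq> j \<and> ladj j k}"
        unfolding u T_def Eg_def by auto
    qed
    then have "deg_in Eg S (i,j) = ldeg T j"
      unfolding deg_in_def ldeg_def by (simp add: card_image inj_on_def)
    then show ?thesis using reg that unfolding T_def by auto
  qed
  show A: "card T = 0 \<or> card T = d + 1 \<or> (d \<le> 2 \<and> card T = 2*d + 2)"
    using local_regular[OF fin _ ] ld by (cases "T = {}") auto
  show "card T = 0 \<or> card T = d + 1" if "p - 1 \<le> i"
  proof (cases "T = {}")
    case False
    then obtain j where j: "j \<in> T" by auto
    have "sz p i \<le> 3" using that unfolding sz_def by auto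
    then have "T \<subseteq> {..<6}" using Tsub by auto
    then have "ldeg T j = card T - 1" using ldeg_small j fin by blast
    moreover have "card T \<ge> 1" using False fin by (simp add: Suc_leI card_gt_0_iff)
    ultimately show ?thesis using ld[OF j] by simp
  qed simp
  show "card T \<le> 3" if "p - 1 \<le> i"
  proof -
    have "sz p i \<le> 3" using that unfolding sz_def by auto
    then show ?thesis using card_mono[OF _ Tsub] by simp
  qed
  show "card T \<le> 1" if "p \<le> i"
  proof -
    have "sz p i \<le> 1" using that p7 unfolding sz_def by auto
    then show ?thesis using card_mono[OF _ Tsub] by simp
  qed
  show "d + 1 \<le> om p i" if "i < p - 1" "card T = d + 1"
  proof -
    have cl: "\<forall>j\<in>T. \<forall>k\<in>T. k \<noteq> j \<longrightarrow> ladj j k"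
      using ldeg_full_clique[OF fin] ld that(2) by simp
    have "om p i \<ge> 6" using p7 unfolding om_def by auto
    moreover have "sz p i = om p i + 6" using that unfolding sz_def by simp
    ultimately have "card T \<le> om p i" using clique_bound[OF Tsub _ cl] by simp
    then show ?thesis using that by simp
  qed
qed

lemma prime_3_dvd:
  assumes "prime (p::nat)" "p \<ge> 7" "3 dvd p" shows False
proof -
  have h: "\<forall>m. m dvd p \<longrightarrow> m = 1 \<or> m = p" using assms(1) by (simp add: prime_nat_iff)
  have "(3::nat) = 1 \<or> 3 = p" using h[rule_format, OF assms(3)] .
  then show False using assms(2) by simp
qed

lemma no_reg:
  assumes pp: "prime p" and p7: "p \<ge> 7" and S: "S \<subseteq> VV p" and cS: "card S = 4*p"
    and reg: "\<forall>v\<in>S. deg_in Eg S v = d"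
  shows False
proof -
  define c where "c i = card {j. (i,j) \<in> S}" for i
  have F1: "c i = 0 \<or> c i = d + 1 \<or> (d \<le> 2 \<and> c i = 2*d + 2)" if "i < 3*p" for i
    using comp_facts(1)[OF p7 S reg that] unfolding c_def .
  have F2: "c i = 0 \<or> c i = d + 1" if "i < 3*p" "p - 1 \<le> i" for i
    using comp_facts(2)[OF p7 S reg that(1)] that(2) unfolding c_def .
  have F3: "c i \<le> 3" if "i < 3*p" "p - 1 \<le> i" for i
    using comp_facts(3)[OF p7 S reg that(1)] that(2) unfolding c_def .
  have F4: "c i \<le> 1" if "i < 3*p" "p \<le> i" for i
    using comp_facts(4)[OF p7 S reg that(1)] that(2) unfolding c_def .
  have F5: "d + 1 \<le> om p i" if "i < p - 1" "c i = d + 1" for i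
  proof -
    have "i < 3*p" using that(1) by simp
    then show ?thesis using comp_facts(5)[OF p7 S reg \<open>i < 3*p\<close>] that unfolding c_def by blast
  qed
  have Seq: "S = Sigma {..<3*p} (\<lambda>i. {j. (i,j) \<in> S})" using S unfolding VV_def by auto
  have finT: "finite {j. (i,j) \<in> S}" if "i < 3*p" for i
  proof -
    have "{j. (i,j) \<in> S} \<subseteq> {..<sz p i}" using S unfolding VV_def by auto
    then show ?thesis using finite_subset by blast
  qed
  have sumc: "(\<Sum>i<3*p. c i) = 4*p"
    using cS Seq card_SigmaI[of "{..<3*p}" "\<lambda>i. {j. (i,j) \<in> S}"] finT unfolding c_def by simp
  have pm: "p - 1 \<le> 3*p" by simp
  show False
  proof (cases "d = 0")
    case True
    define g where "g i = (if i < p - 1 then 2 else 1::nat)" for i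
    have "c i \<le> g i" if "i < 3*p" for i
    proof (cases "i < p - 1")
      case True
      then show ?thesis using F1[OF that] \<open>d = 0\<close> unfolding g_def by auto
    next
      case False
      then show ?thesis using F2[OF that] \<open>d = 0\<close> unfolding g_def by auto
    qed
    then have "(\<Sum>i<3*p. c i) \<le> (\<Sum>i<3*p. g i)" by (intro sum_mono) simp
    also have "\<dots> = (\<Sum>i<p-1. g i) + (\<Sum>i\<in>{p-1..<3*p}. g i)" using sum_split3[OF pm] .
    also have "(\<Sum>i<p-1. g i) = (\<Sum>i<p-1. 2)" unfolding g_def by (intro sum.cong) auto
    also have "(\<Sum>i\<in>{p-1..<3*p}. g i) = (\<Sum>i\<in>{p-1..<3*p}. 1)" unfolding g_def by (intro sum.cong) auto
    finally have "4*p \<le> 2*(p-1) + (3*p - (p-1))" using sumc by simp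
    then show False using p7 by simp
  next
    case d0: False
    show False
    proof (cases "d = 1")
      case True
      define g where "g i = (if i < p - 1 then 4 else if i = p - 1 then 2 else 0::nat)" for i
      have "c i \<le> g i" if "i < 3*p" for i
      proof (cases "i < p - 1")
        case True
        then show ?thesis using F1[OF that] \<open>d = 1\<close> unfolding g_def by auto
      next
        case False
        show ?thesis
        proof (cases "i = p - 1")
          case True
          then show ?thesis using F2[OF that] F3[OF that] \<open>d = 1\<close> unfolding g_def by auto
        next
          case False
          then have "p \<le> i" using \<open>\<not> i < p - 1\<close> by simp
          then show ?thesis using F2[OF that] F4[OF that] \<open>d = 1\<close> \<open>\<not> i < p - 1\<close> unfolding g_def by auto
        qed
      qed
      then have "(\<Sum>i<3*p. c i) \<le> (\<Sum>i<3*p. g i)" by (intro sum_mono) simp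
      also have "\<dots> = (\<Sum>i<p-1. g i) + (\<Sum>i\<in>{p-1..<3*p}. g i)" using sum_split3[OF pm] .
      also have "(\<Sum>i<p-1. g i) = (\<Sum>i<p-1. 4)" unfolding g_def by (intro sum.cong) auto
      also have "(\<Sum>i\<in>{p-1..<3*p}. g i) = (\<Sum>i\<in>{p-1..<3*p}. if i = p - 1 then 2 else 0)"
        unfolding g_def by (intro sum.cong) auto
      also have "\<dots> = 2" using p7 by (simp add: sum.delta')
      finally have "4*p \<le> 4*(p-1) + 2" using sumc by simp
      then show False using p7 by simp
    next
      case d1: False
      show False
      proof (cases "d = 2")
        case True
        have "3 dvd c i" if "i \<in> {..<3*p}" for i using F1[of i] that \<open>d = 2\<close> by auto
        then have "3 dvd (\<Sum>i<3*p. c i)" by (rule dvd_sum)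
        then have "3 dvd p" using sumc by presburger
        then show False using prime_3_dvd pp p7 by blast
      next
        case False
        then have d3: "d \<ge> 3" using d0 d1 by simp
        have C: "c i = 0 \<or> c i = d + 1" if "i < 3*p" for i using F1[OF that] d3 by auto
        define J where "J = {i \<in> {..<3*p}. c i \<noteq> 0}"
        have Jsmall: "i < p - 1 \<and> d + 1 \<le> om p i" if "i \<in> J" for i
        proof -
          have i: "i < 3*p" "c i \<noteq> 0" using that unfolding J_def by auto
          have "i < p - 1"
          proof (rule ccontr)
            assume "\<not> i < p - 1"
            then have "c i \<le> 3" "c i = d + 1" using F3[OF i(1)] C[OF i(1)] i(2) by auto
            then show False using d3 by simp
          qed
          moreover have "c i = d + 1" using C[OF i(1)] i(2) by simp
          ultimately show ?thesis using F5 by blast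
        qed
        have finJ: "finite J" unfolding J_def by simp
        have JS: "J \<subseteq> {..<3*p}" unfolding J_def by blast
        have JZ: "\<forall>i\<in>{..<3*p} - J. c i = 0" unfolding J_def by blast
        have "(\<Sum>i<3*p. c i) = (\<Sum>i\<in>J. c i)"
          by (rule sum.mono_neutral_right[OF finite_lessThan JS JZ])
        also have "\<dots> = (\<Sum>i\<in>J. d + 1)"
        proof (rule sum.cong[OF refl])
          fix i assume "i \<in> J"
          then have i1: "i < 3*p" and i2: "c i \<noteq> 0" unfolding J_def by auto
          have "c i = 0 \<or> c i = d + 1" using C[OF i1] .
          then show "c i = d + 1" using i2 by simp
        qed
        finally have prod: "card J * (d + 1) = 4*p" using sumc by simp
        have Jsub: "J \<subseteq> {..<p-1}" using Jsmall by auto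
        then have cJ: "card J \<le> p - 1" using card_mono[of "{..<p-1}" J] by simp
        have Jpos: "card J > 0"
        proof (rule ccontr)
          assume "\<not> card J > 0"
          then have "card J = 0" by simp
          then show False using prod p7 by simp
        qed
        show False
        proof (cases "d + 1 < p")
          case True
          have "p dvd card J * (d + 1)" using prod by simp
          then have "p dvd card J \<or> p dvd (d + 1)" by (rule prime_dvd_multD[OF pp])
          then show False
          proof
            assume "p dvd card J"
            then have "p \<le> card J" using Jpos by (simp add: dvd_imp_le)
            then show False using cJ p7 by simp
          next
            assume "p dvd (d + 1)"
            then have "p \<le> d + 1" by (simp add: dvd_imp_le)
            then show False using True by simp
          qed
        next
          case False
          then have pd: "p \<le> d + 1" by simp
          have J3: "J \<subseteq> {..<3}"
          proof
            fix i assume "i \<in> J"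
            then have "d + 1 \<le> om p i" using Jsmall by blast
            then show "i \<in> {..<3}" using pd p7 unfolding om_def by (auto split: if_splits)
          qed
          then have cJ3: "card J \<le> 3" using card_mono[of "{..<3}" J] by simp
          show False
          proof (cases "d + 1 < 2*p")
            case True
            have "card J = 1 \<or> card J = 2 \<or> card J = 3" using cJ3 Jpos by auto
            then show False
            proof (elim disjE)
              assume "card J = 1" then have "d + 1 = 4 * p" using prod by simp
              then show False using True by simp
            next
              assume "card J = 2" then have "2 * (d + 1) = 4 * p" using prod by simp
              then show False using True by simp
            next
              assume "card J = 3"
              then have "3 * (d + 1) = 4 * p" using prod by simp
              then have "3 dvd p" by presburger
              then show False using prime_3_dvd pp p7 by blast
            qed
          next
            case False
            have J1: "J \<subseteq> {0}"
            proof
              fix i assume "i \<in> J"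
              then have "d + 1 \<le> om p i" using Jsmall by blast
              then show "i \<in> {0}" using False p7 unfolding om_def by (auto split: if_splits)
            qed
            then have "card J \<le> 1" using card_mono[of "{0}" J] by simp
            then have "card J = 1" using Jpos by simp
            then have "J = {0}" using J1 by (auto simp: subset_singleton_iff)
            then have "d + 1 \<le> om p 0" using Jsmall by blast
            then show False using prod \<open>card J = 1\<close> p7 unfolding om_def by simp
          qed
        qed
      qed
    qed
  qed
qed

lemma card_VV:
  assumes p7: "p \<ge> 7"
  shows "card (VV p) = p^2 + 11*p - 2"
proof -
  obtain q where q: "p = q + 7" using p7 by (metis add.commute le_Suc_ex)
  have "card (VV p) = (\<Sum>i<3*p. sz p i)"
    unfolding VV_def by (simp add: card_SigmaI)
  also have "\<dots> = (\<Sum>i<3. sz p i) + (\<Sum>i\<in>{3..<3*p}. sz p i)"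
    using sum_split3[of 3 "3*p" "sz p"] p7 by simp
  also have "(\<Sum>i\<in>{3..<3*p}. sz p i) = (\<Sum>i\<in>{3..<p-1}. sz p i) + (\<Sum>i\<in>{p-1..<3*p}. sz p i)"
  proof -
    have "{3..<3*p} = {3..<p-1} \<union> {p-1..<3*p}" "{3..<p-1} \<inter> {p-1..<3*p} = {}" using p7 by auto
    then show ?thesis by (simp add: sum.union_disjoint)
  qed
  also have "(\<Sum>i\<in>{p-1..<3*p}. sz p i) = sz p (p-1) + (\<Sum>i\<in>{p..<3*p}. sz p i)"
  proof -
    have "{p-1..<3*p} = insert (p-1) {p..<3*p}" using p7 by auto
    moreover have "p - 1 \<notin> {p..<3*p}" using p7 by simp
    ultimately show ?thesis by simp
  qed
  also have "(\<Sum>i\<in>{p..<3*p}. sz p i) = (\<Sum>i\<in>{p..<3*p}. 1)"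
    by (intro sum.cong) (auto simp: sz_def)
  also have "(\<Sum>i\<in>{3..<p-1}. sz p i) = (\<Sum>i\<in>{3..<p-1}. p + 5)"
    using p7 by (intro sum.cong) (auto simp: sz_def om_def)
  also have "(\<Sum>i<3. sz p i) = sz p 0 + sz p 1 + sz p 2"
    by (simp add: numeral_3_eq_3 numeral_2_eq_2)
  finally have "card (VV p) = sz p 0 + sz p 1 + sz p 2 + ((p - 1 - 3) * (p + 5) + (sz p (p - 1) + (3 * p - p)))"
    by simp
  moreover have "sz p 0 = 4*p + 5" "sz p 1 = 2*p + 5" "sz p 2 = 2*p + 5" "sz p (p-1) = 3"
    using p7 by (auto simp: sz_def om_def)
  ultimately show ?thesis unfolding q by (simp add: algebra_simps power2_eq_square)
qed

lemma finite_VV: "finite (VV p)"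
  unfolding VV_def by auto

lemma exists_graph:
  assumes pp: "prime p" and p7: "p \<ge> 7"
  shows "\<exists>E::nat \<Rightarrow> nat \<Rightarrow> bool. (\<forall>x y. E x y \<longrightarrow> E y x) \<and> (\<forall>x. \<not> E x x) \<and>
     (\<forall>S. S \<subseteq> {0..<card (VV p)} \<longrightarrow> card S = 4*p \<longrightarrow> \<not> induced_regular E S)"
proof -
  obtain h where h: "bij_betw h {0..<card (VV p)} (VV p)"
    using ex_bij_betw_nat_finite[OF finite_VV] by blast
  define E where "E x y = Eg (h x) (h y)" for x y
  have sym: "\<forall>x y. E x y \<longrightarrow> E y x" unfolding E_def Eg_def using ladj_sym by auto
  have irr: "\<forall>x. \<not> E x x" unfolding E_def Eg_def by auto
  have nr: "\<not> induced_regular E S" if S: "S \<subseteq> {0..<card (VV p)}" and cS: "card S = 4*p" for S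
  proof
    assume "induced_regular E S"
    then obtain d where d: "\<forall>v\<in>S. deg_in E S v = d" unfolding induced_regular_def by blast
    have inj: "inj_on h S" using h S bij_betw_imp_inj_on inj_on_subset by blast
    have sub: "h ` S \<subseteq> VV p" using h S bij_betw_imp_surj_on by blast
    have c': "card (h ` S) = 4*p" using card_image[OF inj] cS by simp
    have "\<forall>v\<in>h ` S. deg_in Eg (h ` S) v = d"
    proof
      fix v assume "v \<in> h ` S"
      then obtain x where x: "x \<in> S" "v = h x" by blast
      have "{u \<in> h ` S. Eg v u} = h ` {y \<in> S. E x y}" unfolding E_def x by auto
      moreover have "inj_on h {y \<in> S. E x y}" using inj inj_on_subset by fastforce
      ultimately have "deg_in Eg (h ` S) v = deg_in E S x"
        unfolding deg_in_def by (simp add: card_image)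
      then show "deg_in Eg (h ` S) v = d" using d x by simp
    qed
    then show False using no_reg[OF pp p7 sub c'] by blast
  qed
  show ?thesis using sym irr nr by blast
qed

lemma ramsey_exists:
  "\<exists>r\<ge>1. \<forall>E :: nat \<Rightarrow> nat \<Rightarrow> bool. simple_graph {0..<r} E \<longrightarrow>
      has_induced_regular_of_order {0..<r} E k"
proof -
  obtain r where r1: "r \<ge> 1" and R: "\<forall>(V::nat set) (Es::nat set set). finite V \<and> card V \<ge> r \<longrightarrow>
    (\<exists>R \<subseteq> V. card R = k \<and> clique R Es \<or> card R = k \<and> indep R Es)"
    using ramsey2[of k k] by blast
  have "has_induced_regular_of_order {0..<r} E k" if sg: "simple_graph {0..<r} E" for E
  proof -
    have sym: "\<And>x y. E x y \<Longrightarrow> E y x" and irr: "\<And>x. \<not> E x x"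
      using sg unfolding simple_graph_def by auto
    define Es where "Es = {{x, y} | x y. E x y}"
    have EsE: "E v w" if "{v, w} \<in> Es" "v \<noteq> w" for v w
    proof -
      have "\<exists>x y. {v, w} = {x, y} \<and> E x y" using that(1) unfolding Es_def by simp
      then obtain x y where xy: "{v, w} = {x, y}" "E x y" by (elim exE conjE)
      then have "(v = x \<and> w = y) \<or> (v = y \<and> w = x)" by (auto simp: doubleton_eq_iff)
      then show ?thesis using xy(2) sym by auto
    qed
    have EEs: "{v, w} \<in> Es" if "E v w" for v w unfolding Es_def using that by blast
    obtain R where Rsub: "R \<subseteq> {0..<r}" and RR: "card R = k \<and> clique R Es \<or> card R = k \<and> indep R Es"
      using R[rule_format, of "{0..<r}" Es] by auto
    have finR: "finite R" using Rsub finite_subset by blast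
    have "induced_regular E R"
      using RR
    proof (elim disjE conjE)
      assume cl: "clique R Es"
      have "deg_in E R v = card R - 1" if "v \<in> R" for v
      proof -
        have "{u \<in> R. E v u} = R - {v}"
        proof (rule set_eqI)
          fix u
          show "u \<in> {u \<in> R. E v u} \<longleftrightarrow> u \<in> R - {v}"
          proof
            assume "u \<in> {u \<in> R. E v u}"
            then have "u \<in> R" "E v u" by auto
            then show "u \<in> R - {v}" using irr by auto
          next
            assume u: "u \<in> R - {v}"
            then have "{v, u} \<in> Es" using cl that unfolding clique_def by auto
            then have "E v u" using EsE u by auto
            then show "u \<in> {u \<in> R. E v u}" using u by auto
          qed
        qed
        then show ?thesis using that finR unfolding deg_in_def by simp
      qed
      then show "induced_regular E R" unfolding induced_regular_def by blast
    next
      assume ind: "indep R Es"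
      have "deg_in E R v = 0" if "v \<in> R" for v
      proof -
        have e: "{u \<in> R. E v u} = {}"
        proof (rule ccontr)
          assume "{u \<in> R. E v u} \<noteq> {}"
          then obtain u where u: "u \<in> R" "E v u" by auto
          have "u \<noteq> v" using u(2) irr by auto
          moreover have "{v, u} \<in> Es" using EEs u(2) by blast
          ultimately show False using ind that u(1) unfolding indep_def by auto
        qed
        show ?thesis unfolding deg_in_def e by simp
      qed
      then show "induced_regular E R" unfolding induced_regular_def by blast
    qed
    then show ?thesis unfolding has_induced_regular_of_order_def using Rsub RR by blast
  qed
  then show ?thesis using r1 by blast
qed

theorem theorem9:
  fixes p :: nat
  assumes "prime p" and "p \<ge> 7"
  shows "N_eq (4 * p) \<ge> p ^ 2 + 11 * p - 1"
proof -
  define P where "P n \<longleftrightarrow> n \<ge> 1 \<and> (\<forall>E :: nat \<Rightarrow> nat \<Rightarrow> bool. simple_graph {0..<n} E \<longrightarrow>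
        has_induced_regular_of_order {0..<n} E (4*p))" for n
  obtain r where "P r" using ramsey_exists[of "4*p"] unfolding P_def by blast
  then have PL: "P (LEAST n. P n)" by (rule LeastI)
  have eq: "N_eq (4*p) = (LEAST n. P n)" unfolding N_eq_def P_def by simp
  obtain E :: "nat \<Rightarrow> nat \<Rightarrow> bool" where sym: "\<forall>x y. E x y \<longrightarrow> E y x" and irr: "\<forall>x. \<not> E x x"
    and nr: "\<forall>S. S \<subseteq> {0..<card (VV p)} \<longrightarrow> card S = 4*p \<longrightarrow> \<not> induced_regular E S"
    using exists_graph[OF assms] by blast
  have cV: "card (VV p) = p^2 + 11*p - 2" using card_VV assms(2) by simp
  have notP: "\<not> P n" if "n \<le> card (VV p)" for n
  proof
    assume Pn: "P n"
    have "simple_graph {0..<n} E" unfolding simple_graph_def using sym irr by blast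
    then have "has_induced_regular_of_order {0..<n} E (4*p)" using Pn unfolding P_def by blast
    then obtain S where S: "S \<subseteq> {0..<n}" "card S = 4*p" "induced_regular E S"
      unfolding has_induced_regular_of_order_def by blast
    have "S \<subseteq> {0..<card (VV p)}" using S(1) that by auto
    then show False using nr S(2,3) by blast
  qed
  show ?thesis
  proof (rule ccontr)
    assume "\<not> p ^ 2 + 11 * p - 1 \<le> N_eq (4 * p)"
    then have "(LEAST n. P n) \<le> card (VV p)" using eq cV by simp
    then show False using notP PL by blast
  qed
qed

end
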